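(* Consider a sequence of local public good games as described in the context with number of players $n\to\infty$, and suppose Assumption 1 holds. Let $\omega>0$ be a scalar such that $w_i\le\omega$ for all players $i$ in all games of the sequence. Then for every choice of sociable Nash equilibria $(x^*,y^*,g^* )$ of these games, the size of the core satisfies $\lim_{n\to\infty}|\mathcal C(g^* )|/n=0$.
   Context: There is a finite set of players $N=\{1,\dots,n\}$. Each player $i$ chooses a public good provision $x_i\ge 0$, a private good consumption $y_i\ge 0$, and links $g_i=(g_{i1},\dots,g_{in})\in\{0,1\}^n$ with $g_{ii}=0$; $g_{ij}=1$ means $i$ links to $j$. Let $\eta_i(g)=|\{j:g_{ij}=1\}|$. Each link costs its sponsor $k>0$ (fixed along the sequence). Player $i$'s spillovers are $\bar x_{-i}=\sum_{j}g_{ij}x_j$ and her public good consumption is $\bar x_i=x_i+\bar x_{-i}$. Player $i$ maximizes $U_i(\bar x_i,y_i)$ subject to $x_i+p_iy_i+\eta_i(g)k=w_i$, where $w_i>0$, $p_i>0$, and $U_i$ is twice continuously differentiable, strictly concave and increasing in both arguments. The Engel curve $\gamma_i$ gives, for income $W$, the public good consumption $\bar x$ maximizing $U_i(\bar x,y)$ subject to $\bar x+p_iy=W$. Assumption 1: each $\gamma_i$ is continuously differentiable with $\gamma_i'\in[0,1]$. A Nash equilibrium is a profile in which each player's strategy solves her maximization problem given the others'; it is sociable if any player who is indifferent between establishing a link or not establishes it. Under Assumption 1, the network of a non-empty sociable equilibrium is a core-periphery graph: players split into a periphery $\mathcal P$ and a core $\mathcal C$ with no links among periphery players, all core players mutually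 linked in both directions, and every periphery player linking to some core player; the core $\mathcal C(g^* )$ consists of the players providing more than $k$ (it is empty if the network is empty). *)

theory Defs
  imports "HOL-Analysis.Analysis"
begin

text \<open>Players of an n-player game are 0,...,n-1. Utilities are functions of
  (public good consumption, private good consumption).\<close>

definition strictly_concave_on :: "(real \<times> real) set \<Rightarrow> (real \<times> real \<Rightarrow> real) \<Rightarrow> bool" where
  "strictly_concave_on S f \<longleftrightarrow> convex S \<and>
     (\<forall>a\<in>S. \<forall>b\<in>S. \<forall>t::real. a \<noteq> b \<and> 0 < t \<and> t < 1 \<longrightarrow>
        f ((1 - t) *\<^sub>R a + t *\<^sub>R b) > (1 - t) * f a + t * f b)"

definition C2_on :: "(real \<times> real) set \<Rightarrow> (real \<times> real \<Rightarrow> real) \<Rightarrow> bool" where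
  "C2_on S f \<longleftrightarrow> (\<exists>Df :: real \<times> real \<Rightarrow> (real \<times> real) \<Rightarrow>\<^sub>L real.
       \<exists>D2f :: real \<times> real \<Rightarrow> (real \<times> real) \<Rightarrow>\<^sub>L ((real \<times> real) \<Rightarrow>\<^sub>L real).
       (\<forall>z\<in>S. (f has_derivative blinfun_apply (Df z)) (at z)) \<and>
       (\<forall>z\<in>S. (Df has_derivative blinfun_apply (D2f z)) (at z)) \<and>
       continuous_on S D2f)"

definition nonneg_quadrant :: "(real \<times> real) set" where
  "nonneg_quadrant = {z. 0 \<le> fst z \<and> 0 \<le> snd z}"

definition pos_quadrant :: "(real \<times> real) set" where
  "pos_quadrant = {z. 0 < fst z \<and> 0 < snd z}"

definition utility_ok :: "(real \<Rightarrow> real \<Rightarrow> real) \<Rightarrow> bool" where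
  "utility_ok U \<longleftrightarrow>
     C2_on pos_quadrant (\<lambda>z. U (fst z) (snd z)) \<and>
     continuous_on nonneg_quadrant (\<lambda>z. U (fst z) (snd z)) \<and>
     strictly_concave_on nonneg_quadrant (\<lambda>z. U (fst z) (snd z)) \<and>
     (\<forall>a a' b. 0 \<le> a \<and> a < a' \<and> 0 \<le> b \<longrightarrow> U a b < U a' b) \<and>
     (\<forall>a b b'. 0 \<le> a \<and> 0 \<le> b \<and> b < b' \<longrightarrow> U a b < U a b')"

definition engel :: "(real \<Rightarrow> real \<Rightarrow> real) \<Rightarrow> real \<Rightarrow> real \<Rightarrow> real" where
  "engel U p W = (THE xb. 0 \<le> xb \<and> 0 \<le> (W - xb) / p \<and>
      (\<forall>xb' y'. 0 \<le> xb' \<and> 0 \<le> y' \<and> xb' + p * y' = W \<longrightarrow> U xb' y' \<le> U xb ((W - xb) / p)))"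

definition assumption1 :: "(real \<Rightarrow> real \<Rightarrow> real) \<Rightarrow> real \<Rightarrow> bool" where
  "assumption1 U p \<longleftrightarrow> (\<exists>d. continuous_on {0<..} d \<and>
      (\<forall>W>0. (engel U p has_real_derivative d W) (at W) \<and> 0 \<le> d W \<and> d W \<le> 1))"

definition num_links :: "nat \<Rightarrow> (nat \<Rightarrow> bool) \<Rightarrow> nat" where
  "num_links n gi = card {j. j < n \<and> gi j}"

definition feasible ::
  "nat \<Rightarrow> (nat \<Rightarrow> real) \<Rightarrow> (nat \<Rightarrow> real) \<Rightarrow> real \<Rightarrow> nat \<Rightarrow> real \<Rightarrow> real \<Rightarrow> (nat \<Rightarrow> bool) \<Rightarrow> bool" where
  "feasible n w p k i xi yi gi \<longleftrightarrow> 0 \<le> xi \<and> 0 \<le> yi \<and> \<not> gi i \<and> (\<forall>j. gi j \<longrightarrow> j < n) \<and>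
     xi + p i * yi + real (num_links n gi) * k = w i"

definition payoff ::
  "nat \<Rightarrow> (nat \<Rightarrow> real \<Rightarrow> real \<Rightarrow> real) \<Rightarrow> (nat \<Rightarrow> real) \<Rightarrow> nat \<Rightarrow> real \<Rightarrow> real \<Rightarrow> (nat \<Rightarrow> bool) \<Rightarrow> real" where
  "payoff n U x i xi yi gi = U i (xi + (\<Sum>j\<in>{j. j < n \<and> gi j}. x j)) yi"

definition nash_eq ::
  "nat \<Rightarrow> (nat \<Rightarrow> real \<Rightarrow> real \<Rightarrow> real) \<Rightarrow> (nat \<Rightarrow> real) \<Rightarrow> (nat \<Rightarrow> real) \<Rightarrow> real \<Rightarrow>
   (nat \<Rightarrow> real) \<Rightarrow> (nat \<Rightarrow> real) \<Rightarrow> (nat \<Rightarrow> nat \<Rightarrow> bool) \<Rightarrow> bool" where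
  "nash_eq n U w p k x y g \<longleftrightarrow> (\<forall>i<n.
     feasible n w p k i (x i) (y i) (g i) \<and>
     (\<forall>xi yi gi. feasible n w p k i xi yi gi \<longrightarrow>
        payoff n U x i xi yi gi \<le> payoff n U x i (x i) (y i) (g i)))"

text \<open>Sociable: if player i can add the link to j (keeping her other links,
  re-optimizing provision and private consumption) and be at least as well off,
  i.e. she is indifferent about establishing the link, then she links to j.\<close>
definition sociable_nash_eq ::
  "nat \<Rightarrow> (nat \<Rightarrow> real \<Rightarrow> real \<Rightarrow> real) \<Rightarrow> (nat \<Rightarrow> real) \<Rightarrow> (nat \<Rightarrow> real) \<Rightarrow> real \<Rightarrow>
   (nat \<Rightarrow> real) \<Rightarrow> (nat \<Rightarrow> real) \<Rightarrow> (nat \<Rightarrow> nat \<Rightarrow> bool) \<Rightarrow> bool" where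
  "sociable_nash_eq n U w p k x y g \<longleftrightarrow> nash_eq n U w p k x y g \<and>
     (\<forall>i<n. \<forall>j<n. j \<noteq> i \<longrightarrow>
        (\<exists>xi yi. feasible n w p k i xi yi ((g i)(j := True)) \<and>
            payoff n U x i xi yi ((g i)(j := True)) \<ge> payoff n U x i (x i) (y i) (g i))
        \<longrightarrow> g i j)"

definition core :: "nat \<Rightarrow> real \<Rightarrow> (nat \<Rightarrow> real) \<Rightarrow> (nat \<Rightarrow> nat \<Rightarrow> bool) \<Rightarrow> nat set" where
  "core n k x g = (if (\<forall>i<n. \<forall>j<n. \<not> g i j) then {} else {i. i < n \<and> x i > k})"

end

theory Submission
  imports Defs
begin

lemma core_bound:
  assumes ne: "nash_eq n U w p k x y g"
    and kp: "k > 0"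
    and wb: "\<And>i. i < n \<Longrightarrow> w i \<le> \<omega>"
    and pp: "\<And>i. i < n \<Longrightarrow> p i > 0"
    and Uok: "\<And>i. i < n \<Longrightarrow> utility_ok (U i)"
    and om: "\<omega> > 0"
  shows "real (card {i. i < n \<and> x i > k}) * k \<le> \<omega>"
proof (cases "{i. i < n \<and> x i > k} = {}")
  case True then show ?thesis using om by (simp only: card.empty)
next
  case False
  define C where "C = {i. i < n \<and> x i > k}"
  from False obtain i where iC: "i \<in> C" unfolding C_def by blast
  have iN: "i < n" and xi: "x i > k" using iC C_def by auto
  have feas: "\<And>j. j < n \<Longrightarrow> feasible n w p k j (x j) (y j) (g j)"
    using ne unfolding nash_eq_def by blast
  have xnn: "\<And>j. j < n \<Longrightarrow> 0 \<le> x j" using feas unfolding feasible_def by blast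
  have fi: "feasible n w p k i (x i) (y i) (g i)" using feas iN .
  have opt: "\<And>xi yi gi. feasible n w p k i xi yi gi \<Longrightarrow>
        payoff n U x i xi yi gi \<le> payoff n U x i (x i) (y i) (g i)"
    using ne iN unfolding nash_eq_def by blast
  have mono: "\<And>a a' b. 0 \<le> a \<Longrightarrow> a < a' \<Longrightarrow> 0 \<le> b \<Longrightarrow> U i a b < U i a' b"
    using Uok[OF iN] unfolding utility_ok_def by blast
  define L where "L = {j. j < n \<and> g i j}"
  have finL: "finite L" unfolding L_def by simp
  have link: "g i j" if jC: "j \<in> C" and ji: "j \<noteq> i" for j
  proof (rule ccontr)
    assume ng: "\<not> g i j"
    have jN: "j < n" and xj: "x j > k" using jC C_def by auto
    define gi' where "gi' = (g i)(j := True)"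
    have L': "{j'. j' < n \<and> gi' j'} = insert j L"
      unfolding gi'_def L_def using jN by auto
    have jL: "j \<notin> L" unfolding L_def using ng by simp
    have nl: "num_links n gi' = num_links n (g i) + 1"
      unfolding num_links_def using L' jL finL by (simp add: L_def)
    have f': "feasible n w p k i (x i - k) (y i) gi'"
      using fi xi ji jN nl unfolding feasible_def gi'_def
      by (auto simp: algebra_simps)
    have S: "(\<Sum>j'\<in>{j'. j' < n \<and> gi' j'}. x j') = x j + (\<Sum>j'\<in>L. x j')"
      using L' jL finL by simp
    have Snn: "0 \<le> (\<Sum>j'\<in>L. x j')" by (rule sum_nonneg) (use xnn L_def in auto)
    have ynn: "0 \<le> y i" using fi unfolding feasible_def by simp
    have "payoff n U x i (x i) (y i) (g i) < payoff n U x i (x i - k) (y i) gi'"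
      unfolding payoff_def S L_def[symmetric]
      using mono[of "x i + (\<Sum>j'\<in>L. x j')" "x i - k + (x j + (\<Sum>j'\<in>L. x j'))" "y i"]
        xnn[OF iN] Snn ynn xj by simp
    with opt[OF f'] show False by simp
  qed
  have sub: "C - {i} \<subseteq> L" using link C_def L_def by auto
  have finC: "finite C" unfolding C_def by simp
  have "card C - 1 \<le> card L"
    using card_mono[OF finL sub] card_Diff_singleton[OF iC] by simp
  hence cL: "real (card C) \<le> real (card L) + 1" by linarith
  have bud: "x i + p i * y i + real (card L) * k = w i"
    using fi unfolding feasible_def num_links_def L_def by simp
  have "p i * y i \<ge> 0" using pp[OF iN] fi unfolding feasible_def by simp
  hence "x i + real (card L) * k \<le> \<omega>" using bud wb[OF iN] by linarith
  moreover have "real (card C) * k \<le> (real (card L) + 1) * k"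
    using cL kp by (simp add: mult_right_mono)
  ultimately show ?thesis using xi unfolding C_def[symmetric] by (simp add: algebra_simps)
qed

theorem proposition3:
  fixes n :: "nat \<Rightarrow> nat"
    and U :: "nat \<Rightarrow> nat \<Rightarrow> real \<Rightarrow> real \<Rightarrow> real"
    and w p :: "nat \<Rightarrow> nat \<Rightarrow> real"
    and k \<omega> :: real
    and x y :: "nat \<Rightarrow> nat \<Rightarrow> real"
    and g :: "nat \<Rightarrow> nat \<Rightarrow> nat \<Rightarrow> bool"
  assumes n_lim: "filterlim n at_top sequentially"
    and k_pos: "k > 0"
    and w_pos: "\<And>m i. i < n m \<Longrightarrow> w m i > 0"
    and p_pos: "\<And>m i. i < n m \<Longrightarrow> p m i > 0"
    and U_ok: "\<And>m i. i < n m \<Longrightarrow> utility_ok (U m i)"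
    and A1: "\<And>m i. i < n m \<Longrightarrow> assumption1 (U m i) (p m i)"
    and omega_pos: "\<omega> > 0"
    and w_bound: "\<And>m i. i < n m \<Longrightarrow> w m i \<le> \<omega>"
    and eq: "\<And>m. sociable_nash_eq (n m) (U m) (w m) (p m) k (x m) (y m) (g m)"
  shows "(\<lambda>m. real (card (core (n m) k (x m) (g m))) / real (n m)) \<longlonglongrightarrow> 0"
proof -
  have cb: "real (card (core (n m) k (x m) (g m))) \<le> \<omega> / k" for m
  proof -
    have "real (card {i. i < n m \<and> x m i > k}) * k \<le> \<omega>"
      by (rule core_bound[of "n m" "U m" "w m" "p m" k "x m" "y m" "g m"])
        (use eq k_pos w_bound p_pos U_ok omega_pos in \<open>auto simp: sociable_nash_eq_def\<close>)
    hence "real (card {i. i < n m \<and> x m i > k}) \<le> \<omega> / k" using k_pos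
      by (simp add: field_simps)
    thus ?thesis unfolding core_def using omega_pos k_pos by auto
  qed
  have rn: "filterlim (\<lambda>m. real (n m)) at_infinity sequentially"
    using filterlim_compose[OF filterlim_real_sequentially n_lim]
    by (rule filterlim_at_top_imp_at_infinity)
  have lim: "(\<lambda>m. (\<omega> / k) / real (n m)) \<longlonglongrightarrow> 0"
    by (rule tendsto_divide_0[OF tendsto_const rn])
  show ?thesis
  proof (rule tendsto_sandwich[OF _ _ tendsto_const lim])
    show "\<forall>\<^sub>F m in sequentially. 0 \<le> real (card (core (n m) k (x m) (g m))) / real (n m)"
      by simp
    show "\<forall>\<^sub>F m in sequentially. real (card (core (n m) k (x m) (g m))) / real (n m) \<le> \<omega> / k / real (n m)"
      by (rule always_eventually) (intro allI divide_right_mono cb, simp)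
  qed
qed

end
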